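(* Let $\lambda_1 \in \mathbb{R}\setminus\{0\}$ and let all constants $\mu_i$ ($i=1,\dots,7$) be arbitrary real numbers. For real functions $F,K,R$ of one variable, consider the nonlinear differential operator acting on smooth functions $w=w(z)$, $$\mathbf{F}_T[w]=\frac{d}{dz}\Big(F(w)\frac{dw}{dz}\Big)+K(w)\frac{dw}{dz}+R(w).$$ A finite-dimensional linear space $\mathbf{V}$ of functions of $z$ is called invariant under $\mathbf{F}_T$ if $\mathbf{F}_T[w]\in\mathbf{V}$ for every $w\in\mathbf{V}$. Then in each of the following five cases the two-dimensional space $\mathbf{V}_2$ (which is the solution space of a second-order linear ODE $y''+p_1(z)y'+p_0(z)y=0$ with $p_1(z)p_0(z)=0$) is invariant under $\mathbf{F}_T$: 1. $F(w)=\lambda_1^2\big(\tfrac12\mu_5w^2+\mu_6w+\mu_7\big)$, $K(w)=\lambda_1(\mu_3w+\mu_4)$, $R(w)=\mu_1w+\mu_2$, and $\mathbf{V}_2=\mathrm{Span}\{1,z\}$. 2. For $\rho_1\neq0$: $F(w)=\lambda_1^2\Big(-\frac{1}{12}\cdot\frac{-6\mu_5\rho_1\lambda_1w-\mu_1w^2+3\mu_2w}{\rho_1^2\lambda_1^2}+\mu_7\Big)$, $K(w)=\lambda_1\Big(\frac{5}{12}\frac{\mu_1w^2}{\rho_1\lambda_1}+\mu_5w+\mu_6\Big)$, $R(w)=\frac16\mu_1w^3+\frac12\mu_2w^2+\mu_3w+\mu_4$, and $\mathbf{V}_2=\mathrm{Span}\{1,e^{-\rho_1z}\}$. 3. For $\rho_0>0$: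 $F(w)=\lambda_1^2\Big(\frac{\mu_1w^2}{3\lambda_1^2\rho_0}+\mu_4\Big)$, $K(w)=\lambda_1\mu_3$, $R(w)=\mu_1w^3+\mu_2w$, and $\mathbf{V}_2=\mathrm{Span}\{\sin(\sqrt{\rho_0}z),\cos(\sqrt{\rho_0}z)\}$. 4. $F(w)=\lambda_1^2(\mu_4w+\mu_5)$, $K(w)=0$, $R(w)=\mu_2w+\mu_3$, and $\mathbf{V}_2=\mathrm{Span}\{1,(z-\mu_1)^2\}$. 5. For $\mu_1\neq0$: $F(w)=\lambda_1^2\Big(\frac{\mu_1^2\mu_3}{4\lambda_1^2}w+\mu_6\Big)$, $K(w)=0$, $R(w)=\frac12\mu_3w^2+\mu_4w+\mu_5$, and $\mathbf{V}_2=\mathrm{Span}\{1,\sin\big(\tfrac{z+\mu_2}{\mu_1}\big)\}$.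
   Context: This operator arises from the $(3+1)$-dimensional time-fractional convection-diffusion-reaction equation $\partial_t^\alpha u=\sum_{r=1}^3\partial_{x_r}(F_r(u)\partial_{x_r}u)+\sum_{r=1}^3K_r(u)\partial_{x_r}u+R(u)$ via the substitution $u(x_1,x_2,x_3,t)=w(z,t)$, $z=\lambda_1x_1+\lambda_2x_2+\lambda_3x_3$, with $F(w)=\sum_{r=1}^3\lambda_r^2F_r(w)$ and $K(w)=\sum_{r=1}^3\lambda_rK_r(w)$; the claim concerns only the resulting ordinary differential operator in $z$. *)

theory Defs
  imports "HOL-Analysis.Analysis"
begin

definition FT :: "(real \<Rightarrow> real) \<Rightarrow> (real \<Rightarrow> real) \<Rightarrow> (real \<Rightarrow> real) \<Rightarrow> (real \<Rightarrow> real) \<Rightarrow> (real \<Rightarrow> real)" where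
  "FT F K R w = (\<lambda>z. deriv (\<lambda>s. F (w s) * deriv w s) z + K (w z) * deriv w z + R (w z))"

definition span2 :: "(real \<Rightarrow> real) \<Rightarrow> (real \<Rightarrow> real) \<Rightarrow> (real \<Rightarrow> real) set" where
  "span2 f g = {(\<lambda>z. a * f z + b * g z) | a b. True}"

definition invariant_under :: "(real \<Rightarrow> real) set \<Rightarrow> ((real \<Rightarrow> real) \<Rightarrow> (real \<Rightarrow> real)) \<Rightarrow> bool" where
  "invariant_under V Op \<longleftrightarrow> (\<forall>w\<in>V. Op w \<in> V)"

end

theory Submission
  imports Defs
begin


lemma c1: "invariant_under (span2 (\<lambda>z. 1) (\<lambda>z. z))
      (FT (\<lambda>w. l1^2 * (1/2 * m5 * w^2 + m6 * w + m7))
          (\<lambda>w. l1 * (m3 * w + m4))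
          (\<lambda>w. m1 * w + m2))"
  unfolding invariant_under_def span2_def
proof (intro ballI)
  fix w :: "real \<Rightarrow> real" assume "w \<in> {\<lambda>z. a * 1 + b * z |a b. True}"
  then obtain a b :: real where w: "w = (\<lambda>z. a + b * z)" by auto
  have dw: "deriv (\<lambda>z. a + b * z) = (\<lambda>z. b)"
    by (rule ext, rule DERIV_imp_deriv) (auto intro!: derivative_eq_intros)
  have dG: "deriv (\<lambda>s. l1^2 * (1/2 * m5 * (a + b * s)^2 + m6 * (a + b * s) + m7) * b)
     = (\<lambda>z. l1^2 * (m5 * (a + b * z) + m6) * b^2)"
    by (rule ext, rule DERIV_imp_deriv) (auto intro!: derivative_eq_intros simp: algebra_simps power2_eq_square)
  show "FT (\<lambda>w. l1^2 * (1/2 * m5 * w^2 + m6 * w + m7))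
          (\<lambda>w. l1 * (m3 * w + m4))
          (\<lambda>w. m1 * w + m2) w \<in> {\<lambda>z. a * 1 + b * z |a b. True}"
    unfolding FT_def w dw dG
    by (rule CollectI, rule exI[of _ "l1^2 * b^2 * (m5 * a + m6) + l1 * b * (m3 * a + m4) + m1 * a + m2"],
        rule exI[of _ "l1^2 * b^3 * m5 + l1 * b^2 * m3 + m1 * b"])
       (auto simp: algebra_simps power2_eq_square power3_eq_cube)
qed



lemma c2: assumes r1: "r1 \<noteq> 0" and l1: "l1 \<noteq> 0"
  shows "invariant_under (span2 (\<lambda>z. 1) (\<lambda>z. exp (- r1 * z)))
      (FT (\<lambda>w. l1^2 * (- (1/12) * ((- 6 * m5 * r1 * l1 * w - m1 * w^2 + 3 * m2 * w)
                                         / (r1^2 * l1^2)) + m7))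
          (\<lambda>w. l1 * (5/12 * (m1 * w^2) / (r1 * l1) + m5 * w + m6))
          (\<lambda>w. 1/6 * m1 * w^3 + 1/2 * m2 * w^2 + m3 * w + m4))"
  unfolding invariant_under_def span2_def
proof (intro ballI)
  define F where "F = (\<lambda>w::real. l1^2 * (- (1/12) * ((- 6 * m5 * r1 * l1 * w - m1 * w^2 + 3 * m2 * w)
                                         / (r1^2 * l1^2)) + m7))"
  define F' where "F' = (\<lambda>w::real. l1^2 * (- (1/12) * ((- 6 * m5 * r1 * l1 - 2 * m1 * w + 3 * m2)
                                         / (r1^2 * l1^2))))"
  define K where "K = (\<lambda>w::real. l1 * (5/12 * (m1 * w^2) / (r1 * l1) + m5 * w + m6))"
  define R where "R = (\<lambda>w::real. 1/6 * m1 * w^3 + 1/2 * m2 * w^2 + m3 * w + m4)"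
  fix w :: "real \<Rightarrow> real" assume "w \<in> {\<lambda>z. a * 1 + b * exp (- r1 * z) |a b. True}"
  then obtain a b :: real where w: "w = (\<lambda>z. a + b * exp (- r1 * z))" by auto
  have dw: "deriv (\<lambda>z. a + b * exp (- r1 * z)) = (\<lambda>z. - r1 * b * exp (- r1 * z))"
    by (rule ext, rule DERIV_imp_deriv) (auto intro!: derivative_eq_intros)
  have dF: "(F has_real_derivative F' x) (at x)" for x
    unfolding F_def F'_def using r1 l1
    by (auto intro!: derivative_eq_intros simp: field_simps power2_eq_square)
  have dG: "deriv (\<lambda>s. F (a + b * exp (- r1 * s)) * (- r1 * b * exp (- r1 * s)))
     = (\<lambda>z. F' (a + b * exp (- r1 * z)) * (r1 * b * exp (- r1 * z))^2
            + F (a + b * exp (- r1 * z)) * (r1^2 * b * exp (- r1 * z)))"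
    by (rule ext, rule DERIV_imp_deriv) (auto intro!: derivative_eq_intros DERIV_chain2[OF dF] simp: algebra_simps power2_eq_square)
  have key: "F' (a + u) * (r1 * u)^2 + F (a + u) * (r1^2 * u) + K (a + u) * (- r1 * u) + R (a + u)
     = R a + (F a * r1^2 - K a * r1 + (1/2 * m1 * a^2 + m2 * a + m3)) * u" for u
    unfolding F_def F'_def K_def R_def using r1 l1
    by (simp add: field_simps power2_eq_square power3_eq_cube)
  show "FT F K R w \<in> {\<lambda>z. a * 1 + b * exp (- r1 * z) |a b. True}"
    unfolding FT_def w dw dG
    apply (rule CollectI, rule exI[of _ "R a"], rule exI[of _ "(F a * r1^2 - K a * r1 + (1/2 * m1 * a^2 + m2 * a + m3)) * b"])
    using key[of "b * exp (- r1 * _)"] by (auto simp: algebra_simps power2_eq_square)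
qed



lemma c3: assumes r0: "r0 > 0" and l1: "l1 \<noteq> 0"
  shows "invariant_under (span2 (\<lambda>z. sin (sqrt r0 * z)) (\<lambda>z. cos (sqrt r0 * z)))
      (FT (\<lambda>w. l1^2 * (m1 * w^2 / (3 * l1^2 * r0) + m4))
          (\<lambda>w. l1 * m3)
          (\<lambda>w. m1 * w^3 + m2 * w))"
  unfolding invariant_under_def span2_def
proof (intro ballI)
  define k where "k = sqrt r0"
  have k2: "k^2 = r0" using r0 unfolding k_def by simp
  have kp: "k > 0" using r0 unfolding k_def by simp
  define F where "F = (\<lambda>w::real. l1^2 * (m1 * w^2 / (3 * l1^2 * r0) + m4))"
  define F' where "F' = (\<lambda>w::real. 2 * m1 * w / (3 * r0))"
  define K where "K = (\<lambda>w::real. l1 * m3)"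
  define R where "R = (\<lambda>w::real. m1 * w^3 + m2 * w)"
  fix w :: "real \<Rightarrow> real" assume "w \<in> {\<lambda>z. a * sin (sqrt r0 * z) + b * cos (sqrt r0 * z) |a b. True}"
  then obtain a b :: real where w: "w = (\<lambda>z. a * sin (k * z) + b * cos (k * z))" by (auto simp: k_def)
  have dw: "deriv (\<lambda>z. a * sin (k * z) + b * cos (k * z)) = (\<lambda>z. k * (a * cos (k * z) - b * sin (k * z)))"
    by (rule ext, rule DERIV_imp_deriv) (auto intro!: derivative_eq_intros simp: algebra_simps)
  have dF: "(F has_real_derivative F' x) (at x)" for x
    unfolding F_def F'_def using r0 l1
    by (auto intro!: derivative_eq_intros simp: field_simps power2_eq_square)
  have dG: "deriv (\<lambda>s. F (a * sin (k * s) + b * cos (k * s)) * (k * (a * cos (k * s) - b * sin (k * s))))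
     = (\<lambda>z. F' (a * sin (k * z) + b * cos (k * z)) * (k * (a * cos (k * z) - b * sin (k * z)))^2
            - F (a * sin (k * z) + b * cos (k * z)) * (k^2 * (a * sin (k * z) + b * cos (k * z))))"
    by (rule ext, rule DERIV_imp_deriv) (auto intro!: derivative_eq_intros DERIV_chain2[OF dF] simp: algebra_simps power2_eq_square)
  define A where "A = 2/3 * m1 * (a^2 + b^2) - r0 * l1^2 * m4 + m2"
  have key: "F' (a * s + b * c) * (k * (a * c - b * s))^2
            - F (a * s + b * c) * (k^2 * (a * s + b * c)) + K (a * s + b * c) * (k * (a * c - b * s))
            + R (a * s + b * c)
     = (a * A - l1 * m3 * k * b) * s + (b * A + l1 * m3 * k * a) * c" if sc: "s^2 + c^2 = 1" for s c
  proof -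
    have c2: "c^2 = 1 - s^2" using sc by simp
    have r0k: "r0 = k^2" using k2 by simp
    have kk: "k \<noteq> 0" using kp by simp
    show ?thesis
    unfolding F_def F'_def K_def R_def A_def r0k using kk l1 sc
    apply (simp add: field_simps)
    by algebra
  qed
  show "FT F K R w \<in> {\<lambda>z. a * sin (sqrt r0 * z) + b * cos (sqrt r0 * z) |a b. True}"
    unfolding FT_def w dw dG k_def[symmetric]
    apply (rule CollectI, rule exI[of _ "a * A - l1 * m3 * k * b"], rule exI[of _ "b * A + l1 * m3 * k * a"])
    using key[of "sin (k * _)" "cos (k * _)"] by auto
qed

lemma c4: 
  shows "invariant_under (span2 (\<lambda>z. 1) (\<lambda>z. (z - m1)^2))
      (FT (\<lambda>w. l1^2 * (m4 * w + m5))
          (\<lambda>w. 0)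
          (\<lambda>w. m2 * w + m3))"
  unfolding invariant_under_def span2_def
proof (intro ballI)
  fix w :: "real \<Rightarrow> real" assume "w \<in> {\<lambda>z. a * 1 + b * (z - m1)^2 |a b. True}"
  then obtain a b :: real where w: "w = (\<lambda>z. a + b * (z - m1)^2)" by auto
  have dw: "deriv (\<lambda>z. a + b * (z - m1)^2) = (\<lambda>z. 2 * b * (z - m1))"
    by (rule ext, rule DERIV_imp_deriv) (auto intro!: derivative_eq_intros simp: algebra_simps)
  have dG: "deriv (\<lambda>s. l1^2 * (m4 * (a + b * (s - m1)^2) + m5) * (2 * b * (s - m1)))
     = (\<lambda>z. l1^2 * m4 * (2 * b * (z - m1))^2 + l1^2 * (m4 * (a + b * (z - m1)^2) + m5) * (2 * b))"
    by (rule ext, rule DERIV_imp_deriv) (auto intro!: derivative_eq_intros simp: algebra_simps power2_eq_square)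
  show "FT (\<lambda>w. l1^2 * (m4 * w + m5)) (\<lambda>w. 0) (\<lambda>w. m2 * w + m3) w \<in> {\<lambda>z. a * 1 + b * (z - m1)^2 |a b. True}"
    unfolding FT_def w dw dG
    by (rule CollectI, rule exI[of _ "2 * b * l1^2 * (m4 * a + m5) + m2 * a + m3"],
        rule exI[of _ "6 * l1^2 * m4 * b^2 + m2 * b"])
       (auto simp: algebra_simps power2_eq_square)
qed

lemma c5: assumes m1: "m1 \<noteq> 0" and l1: "l1 \<noteq> 0"
  shows "invariant_under (span2 (\<lambda>z. 1) (\<lambda>z. sin ((z + m2) / m1)))
      (FT (\<lambda>w. l1^2 * (m1^2 * m3 / (4 * l1^2) * w + m6))
          (\<lambda>w. 0)
          (\<lambda>w. 1/2 * m3 * w^2 + m4 * w + m5))"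
  unfolding invariant_under_def span2_def
proof (intro ballI)
  define F where "F = (\<lambda>w::real. l1^2 * (m1^2 * m3 / (4 * l1^2) * w + m6))"
  define F' where "F' = m1^2 * m3 / 4"
  define R where "R = (\<lambda>w::real. 1/2 * m3 * w^2 + m4 * w + m5)"
  fix w :: "real \<Rightarrow> real" assume "w \<in> {\<lambda>z. a * 1 + b * sin ((z + m2) / m1) |a b. True}"
  then obtain a b :: real where w: "w = (\<lambda>z. a + b * sin ((z + m2) / m1))" by auto
  have dw: "deriv (\<lambda>z. a + b * sin ((z + m2) / m1)) = (\<lambda>z. b * cos ((z + m2) / m1) / m1)"
    using m1 by (intro ext DERIV_imp_deriv) (auto intro!: derivative_eq_intros simp: field_simps)
  have dF: "(F has_real_derivative F') (at x)" for x
    unfolding F_def F'_def using l1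
    by (auto intro!: derivative_eq_intros simp: field_simps power2_eq_square)
  have dG: "deriv (\<lambda>s. F (a + b * sin ((s + m2) / m1)) * (b * cos ((s + m2) / m1) / m1))
     = (\<lambda>z. F' * (b * cos ((z + m2) / m1) / m1)^2
            - F (a + b * sin ((z + m2) / m1)) * (b * sin ((z + m2) / m1) / m1^2))"
    using m1 by (intro ext DERIV_imp_deriv) (auto intro!: derivative_eq_intros DERIV_chain2[OF dF] simp: field_simps power2_eq_square)
  have key: "F' * (b * c / m1)^2 - F (a + b * s) * (b * s / m1^2) + 0 * (b * c / m1) + R (a + b * s)
     = (m3 * b^2 / 4 + m3 * a^2 / 2 + m4 * a + m5) + (3 * m3 * a * b / 4 - l1^2 * m6 * b / m1^2 + m4 * b) * s"
     if sc: "s^2 + c^2 = 1" for s c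
  proof -
    have c2: "c^2 = 1 - s^2" using sc by simp
    show ?thesis
    unfolding F_def F'_def R_def using m1 l1 sc
    apply (simp add: field_simps)
    by algebra
  qed
  show "FT F (\<lambda>w. 0) R w \<in> {\<lambda>z. a * 1 + b * sin ((z + m2) / m1) |a b. True}"
    unfolding FT_def w dw dG
    apply (rule CollectI, rule exI[of _ "m3 * b^2 / 4 + m3 * a^2 / 2 + m4 * a + m5"],
      rule exI[of _ "3 * m3 * a * b / 4 - l1^2 * m6 * b / m1^2 + m4 * b"])
    using key[of "sin ((_ + m2) / m1)" "cos ((_ + m2) / m1)"] by auto
qed

theorem theorem3:
  fixes l1 m1 m2 m3 m4 m5 m6 m7 r0 r1 :: real
  assumes "l1 \<noteq> 0"
  shows
   "invariant_under (span2 (\<lambda>z. 1) (\<lambda>z. z))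
      (FT (\<lambda>w. l1^2 * (1/2 * m5 * w^2 + m6 * w + m7))
          (\<lambda>w. l1 * (m3 * w + m4))
          (\<lambda>w. m1 * w + m2))
    \<and> (r1 \<noteq> 0 \<longrightarrow> invariant_under (span2 (\<lambda>z. 1) (\<lambda>z. exp (- r1 * z)))
      (FT (\<lambda>w. l1^2 * (- (1/12) * ((- 6 * m5 * r1 * l1 * w - m1 * w^2 + 3 * m2 * w)
                                         / (r1^2 * l1^2)) + m7))
          (\<lambda>w. l1 * (5/12 * (m1 * w^2) / (r1 * l1) + m5 * w + m6))
          (\<lambda>w. 1/6 * m1 * w^3 + 1/2 * m2 * w^2 + m3 * w + m4)))
    \<and> (r0 > 0 \<longrightarrow> invariant_under (span2 (\<lambda>z. sin (sqrt r0 * z)) (\<lambda>z. cos (sqrt r0 * z)))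
      (FT (\<lambda>w. l1^2 * (m1 * w^2 / (3 * l1^2 * r0) + m4))
          (\<lambda>w. l1 * m3)
          (\<lambda>w. m1 * w^3 + m2 * w)))
    \<and> invariant_under (span2 (\<lambda>z. 1) (\<lambda>z. (z - m1)^2))
      (FT (\<lambda>w. l1^2 * (m4 * w + m5))
          (\<lambda>w. 0)
          (\<lambda>w. m2 * w + m3))
    \<and> (m1 \<noteq> 0 \<longrightarrow> invariant_under (span2 (\<lambda>z. 1) (\<lambda>z. sin ((z + m2) / m1)))
      (FT (\<lambda>w. l1^2 * (m1^2 * m3 / (4 * l1^2) * w + m6))
          (\<lambda>w. 0)
          (\<lambda>w. 1/2 * m3 * w^2 + m4 * w + m5)))"
    apply (intro conjI impI)
      apply (rule c1)
     apply (erule c2[OF _ assms])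
    apply (erule c3[OF _ assms])
   apply (rule c4)
  apply (erule c5[OF _ assms])
  done

end
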